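(* Let $R$ be any associative algebra. Then the Hochschild homology $H_1(R,R_{ab})$ is isomorphic to $\Omega^1_{R_{ab}}$, the module of Kähler differentials of $R_{ab}$.
   Context: Algebras are associative unital $\mathbf{C}$-algebras. $R_{ab}=R/[R,R]$ is the quotient of $R$ by the two-sided ideal generated by all commutators $ab-ba$; it is regarded as an $R$-bimodule via the projection $R\to R_{ab}$. $H_\bullet(R,M)$ denotes Hochschild homology of $R$ with coefficients in an $R$-bimodule $M$. *)

theory Defs
  imports Complex_Main "HOL-Library.Poly_Mapping"
begin

definition is_C_algebra :: "(complex \<Rightarrow> 'a::ring_1 \<Rightarrow> 'a) \<Rightarrow> bool" where
  "is_C_algebra scl \<longleftrightarrow> vector_space scl \<and>
     (\<forall>c x y. scl c (x * y) = scl c x * y \<and> scl c (x * y) = x * scl c y)"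

text \<open>The two-sided ideal [R,R]R generated by all commutators; R_ab = R / comm_ideal.
  (This ideal is automatically a C-subspace.)\<close>

inductive_set comm_ideal :: "'a::ring_1 set" where
  ci_comm: "x * y - y * x \<in> comm_ideal"
| ci_zero: "0 \<in> comm_ideal"
| ci_add: "u \<in> comm_ideal \<Longrightarrow> v \<in> comm_ideal \<Longrightarrow> u + v \<in> comm_ideal"
| ci_left: "u \<in> comm_ideal \<Longrightarrow> r * u \<in> comm_ideal"
| ci_right: "u \<in> comm_ideal \<Longrightarrow> u * r \<in> comm_ideal"

text \<open>The free C-vector space on a type 'k is 'k =>0 complex.\<close>

definition fsc :: "complex \<Rightarrow> ('k \<Rightarrow>\<^sub>0 complex) \<Rightarrow> ('k \<Rightarrow>\<^sub>0 complex)" where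
  "fsc c p = Poly_Mapping.map (\<lambda>v. c * v) p"

definition gen :: "'k \<Rightarrow> ('k \<Rightarrow>\<^sub>0 complex)" where
  "gen k = Poly_Mapping.single k 1"

inductive_set fspan :: "('k \<Rightarrow>\<^sub>0 complex) set \<Rightarrow> ('k \<Rightarrow>\<^sub>0 complex) set" for S where
  fspan_base: "x \<in> S \<Longrightarrow> x \<in> fspan S"
| fspan_zero: "0 \<in> fspan S"
| fspan_add: "x \<in> fspan S \<Longrightarrow> y \<in> fspan S \<Longrightarrow> x + y \<in> fspan S"
| fspan_smult: "x \<in> fspan S \<Longrightarrow> fsc c x \<in> fspan S"

definition fext :: "(complex \<Rightarrow> 'v \<Rightarrow> 'v) \<Rightarrow> ('k \<Rightarrow> 'v::comm_monoid_add)
    \<Rightarrow> ('k \<Rightarrow>\<^sub>0 complex) \<Rightarrow> 'v" where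
  "fext sc g p = (\<Sum>k\<in>Poly_Mapping.keys p. sc (Poly_Mapping.lookup p k) (g k))"

text \<open>Bilinearity relations: R (x)_C R = F(RxR) / fspan bil2, and
  R (x)_C R (x)_C R = F(RxRxR) / fspan bil3.\<close>

definition bil2 :: "(complex \<Rightarrow> 'a::ring_1 \<Rightarrow> 'a) \<Rightarrow> ('a \<times> 'a \<Rightarrow>\<^sub>0 complex) set" where
  "bil2 scl =
     {gen (x + x', y) - gen (x, y) - gen (x', y) | x x' y. True} \<union>
     {gen (x, y + y') - gen (x, y) - gen (x, y') | x y y'. True} \<union>
     {gen (scl c x, y) - fsc c (gen (x, y)) | c x y. True} \<union>
     {gen (x, scl c y) - fsc c (gen (x, y)) | c x y. True}"

definition bil3 :: "(complex \<Rightarrow> 'a::ring_1 \<Rightarrow> 'a) \<Rightarrow> ('a \<times> 'a \<times> 'a \<Rightarrow>\<^sub>0 complex) set" where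
  "bil3 scl =
     {gen (x + x', y, z) - gen (x, y, z) - gen (x', y, z) | x x' y z. True} \<union>
     {gen (x, y + y', z) - gen (x, y, z) - gen (x, y', z) | x y y' z. True} \<union>
     {gen (x, y, z + z') - gen (x, y, z) - gen (x, y, z') | x y z z'. True} \<union>
     {gen (scl c x, y, z) - fsc c (gen (x, y, z)) | c x y z. True} \<union>
     {gen (x, scl c y, z) - fsc c (gen (x, y, z)) | c x y z. True} \<union>
     {gen (x, y, scl c z) - fsc c (gen (x, y, z)) | c x y z. True}"

text \<open>C_0 = R_ab = R / comm_ideal.
  C_1 = R_ab (x) R = F(RxR) / hoch_N1, where a generator gen (m, a) stands for [m] (x) a.
  C_2 = R_ab (x) R (x) R = F(RxRxR) / hoch_N2.\<close>

definition hoch_N1 :: "(complex \<Rightarrow> 'a::ring_1 \<Rightarrow> 'a) \<Rightarrow> ('a \<times> 'a \<Rightarrow>\<^sub>0 complex) set" where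
  "hoch_N1 scl = fspan (bil2 scl \<union> {gen (i, a) | i a. i \<in> comm_ideal})"

definition hoch_N2 :: "(complex \<Rightarrow> 'a::ring_1 \<Rightarrow> 'a) \<Rightarrow> ('a \<times> 'a \<times> 'a \<Rightarrow>\<^sub>0 complex) set" where
  "hoch_N2 scl = fspan (bil3 scl \<union> {gen (i, a, b) | i a b. i \<in> comm_ideal})"

text \<open>Hochschild boundaries (lifted to the free vector spaces):
  b_1 (m (x) a) = m a - a m  (in R, then projected to R_ab),
  b_2 (m (x) a (x) b) = m a (x) b - m (x) a b + b m (x) a.\<close>

definition hoch_b1 :: "(complex \<Rightarrow> 'a::ring_1 \<Rightarrow> 'a) \<Rightarrow> ('a \<times> 'a \<Rightarrow>\<^sub>0 complex) \<Rightarrow> 'a" where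
  "hoch_b1 scl = fext scl (\<lambda>(m, a). m * a - a * m)"

definition hoch_b2 :: "('a::ring_1 \<times> 'a \<times> 'a \<Rightarrow>\<^sub>0 complex) \<Rightarrow> ('a \<times> 'a \<Rightarrow>\<^sub>0 complex)" where
  "hoch_b2 = fext fsc (\<lambda>(m, a, b). gen (m * a, b) - gen (m, a * b) + gen (b * m, a))"

text \<open>H_1(R, R_ab) = ker b_1 / im b_2 = hoch_Z1 / hoch_B1, where both are taken as
  preimages in F(RxR) of the corresponding subspaces of C_1.\<close>

definition hoch_Z1 :: "(complex \<Rightarrow> 'a::ring_1 \<Rightarrow> 'a) \<Rightarrow> ('a \<times> 'a \<Rightarrow>\<^sub>0 complex) set" where
  "hoch_Z1 scl = {z. hoch_b1 scl z \<in> comm_ideal}"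

definition hoch_B1 :: "(complex \<Rightarrow> 'a::ring_1 \<Rightarrow> 'a) \<Rightarrow> ('a \<times> 'a \<Rightarrow>\<^sub>0 complex) set" where
  "hoch_B1 scl = {hoch_b2 w + n | w n. n \<in> hoch_N1 scl}"

text \<open>Omega^1_A = (A (x)_C A) / span {a (x) bc - ab (x) c - ac (x) b}, with a (x) b standing for a db.
  For A = R_ab this is F(RxR) / kaehler_D.\<close>

definition kaehler_D :: "(complex \<Rightarrow> 'a::ring_1 \<Rightarrow> 'a) \<Rightarrow> ('a \<times> 'a \<Rightarrow>\<^sub>0 complex) set" where
  "kaehler_D scl = fspan (bil2 scl \<union> {gen (i, a) | i a. i \<in> comm_ideal}
       \<union> {gen (a, i) | i a. i \<in> comm_ideal}
       \<union> {gen (a, b * c) - gen (a * b, c) - gen (a * c, b) | a b c. True})"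

text \<open>R (hence R_ab) acts on F(RxR) through the first factor: r . (m (x) a) = r m (x) a,
  resp. r . (a db) = r a db.  This induces the R_ab-module structures on H_1(R,R_ab) and on
  Omega^1_{R_ab}.\<close>

definition act1 :: "'a::ring_1 \<Rightarrow> ('a \<times> 'a \<Rightarrow>\<^sub>0 complex) \<Rightarrow> ('a \<times> 'a \<Rightarrow>\<^sub>0 complex)" where
  "act1 r = fext fsc (\<lambda>(m, a). gen (r * m, a))"

text \<open>Z/B ~= F(K')/D as modules (over C, compatible with the actions actZ, actV of R):
  an isomorphism of quotients is given by a (C-linear) map f of the ambient free spaces
  with f(B) <= D, inducing an injective and surjective, R-equivariant map Z/B -> F(K')/D.\<close>

definition subquot_iso ::
  "('r \<Rightarrow> ('k \<Rightarrow>\<^sub>0 complex) \<Rightarrow> ('k \<Rightarrow>\<^sub>0 complex)) \<Rightarrow> ('k \<Rightarrow>\<^sub>0 complex) set \<Rightarrow> ('k \<Rightarrow>\<^sub>0 complex) set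
   \<Rightarrow> ('r \<Rightarrow> ('l \<Rightarrow>\<^sub>0 complex) \<Rightarrow> ('l \<Rightarrow>\<^sub>0 complex)) \<Rightarrow> ('l \<Rightarrow>\<^sub>0 complex) set \<Rightarrow> bool" where
  "subquot_iso actZ Z B actV D \<longleftrightarrow>
     (\<exists>g. let f = fext fsc g in
        (\<forall>z\<in>B. f z \<in> D) \<and>
        (\<forall>z\<in>Z. f z \<in> D \<longrightarrow> z \<in> B) \<and>
        (\<forall>w. \<exists>z\<in>Z. w - f z \<in> D) \<and>
        (\<forall>r. \<forall>z\<in>Z. f (actZ r z) - actV r (f z) \<in> D))"

end

theory Submission
  imports Defs
begin

lemma lookup_fsc [simp]: "Poly_Mapping.lookup (fsc c p) k = c * Poly_Mapping.lookup p k"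
  by (simp add: fsc_def map.rep_eq when_def)

lemma fsc_add: "fsc c (p + q) = fsc c p + fsc c q"
  by (rule poly_mapping_eqI) (simp add: lookup_add algebra_simps)

lemma fsc_add_left: "fsc (a + b) p = fsc a p + fsc b p"
  by (rule poly_mapping_eqI) (simp add: lookup_add algebra_simps)

lemma fsc_mult: "fsc (a * b) p = fsc a (fsc b p)"
  by (rule poly_mapping_eqI) (simp add: algebra_simps)

lemma fsc_0 [simp]: "fsc 0 p = 0"
  by (rule poly_mapping_eqI) simp

lemma fsc_1 [simp]: "fsc 1 p = p"
  by (rule poly_mapping_eqI) simp

lemma fsc_m1: "fsc (-1) p = - p"
  by (rule poly_mapping_eqI) simp

lemma fsc_sum: "fsc c (sum f K) = (\<Sum>k\<in>K. fsc c (f k))"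
  by (rule poly_mapping_eqI) (simp add: lookup_sum sum_distrib_left)

lemma keys_fsc: "Poly_Mapping.keys (fsc c p) \<subseteq> Poly_Mapping.keys p"
  by (auto simp: in_keys_iff)

lemma fext_superset:
  assumes "finite K" "Poly_Mapping.keys p \<subseteq> K"
  shows "fext fsc g p = (\<Sum>k\<in>K. fsc (Poly_Mapping.lookup p k) (g k))"
  unfolding fext_def
  by (rule sum.mono_neutral_left) (auto simp: assms in_keys_iff)

lemma fext_add: "fext fsc g (p + q) = fext fsc g p + fext fsc g q"
proof -
  let ?K = "Poly_Mapping.keys p \<union> Poly_Mapping.keys q"
  have "fext fsc g (p + q) = (\<Sum>k\<in>?K. fsc (Poly_Mapping.lookup (p+q) k) (g k))"
    by (rule fext_superset) (auto dest: set_mp[OF keys_add])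
  also have "\<dots> = (\<Sum>k\<in>?K. fsc (Poly_Mapping.lookup p k) (g k)) + (\<Sum>k\<in>?K. fsc (Poly_Mapping.lookup q k) (g k))"
    by (simp add: lookup_add fsc_add_left sum.distrib)
  also have "\<dots> = fext fsc g p + fext fsc g q"
    by (simp add: fext_superset[symmetric])
  finally show ?thesis .
qed

lemma fext_fsc: "fext fsc g (fsc c p) = fsc c (fext fsc g p)"
proof -
  have "fext fsc g (fsc c p) = (\<Sum>k\<in>Poly_Mapping.keys p. fsc (Poly_Mapping.lookup (fsc c p) k) (g k))"
    by (rule fext_superset) (auto simp: keys_fsc[THEN subsetD])
  also have "\<dots> = fsc c (fext fsc g p)"
    by (simp add: fext_def fsc_sum fsc_mult)
  finally show ?thesis .
qed

lemma fext_zero [simp]: "fext sc g 0 = 0"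
  by (simp add: fext_def)

lemma fext_gen [simp]: "fext fsc g (gen k) = g k"
  by (simp add: fext_def gen_def)

lemma fext_id: "fext fsc gen p = p"
proof (rule poly_mapping_eqI)
  fix j
  have "Poly_Mapping.lookup (fext fsc gen p) j = (\<Sum>k\<in>Poly_Mapping.keys p. Poly_Mapping.lookup p k * (1 when k = j))"
    by (simp add: fext_def lookup_sum gen_def lookup_single)
  also have "\<dots> = Poly_Mapping.lookup p j"
  proof -
    have "(\<Sum>k\<in>Poly_Mapping.keys p. Poly_Mapping.lookup p k * (1 when k = j))
        = (\<Sum>k\<in>Poly_Mapping.keys p. if k = j then Poly_Mapping.lookup p k else 0)"
      by (rule sum.cong) (auto simp: when_def)
    also have "\<dots> = Poly_Mapping.lookup p j"
      by (simp add: sum.delta' in_keys_iff)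
    finally show ?thesis .
  qed
  finally show "Poly_Mapping.lookup (fext fsc gen p) j = Poly_Mapping.lookup p j" .
qed

lemma fspan_uminus: "x \<in> fspan S \<Longrightarrow> - x \<in> fspan S"
  by (metis fsc_m1 fspan_smult)

lemma fspan_diff: "x \<in> fspan S \<Longrightarrow> y \<in> fspan S \<Longrightarrow> x - y \<in> fspan S"
  by (metis diff_conv_add_uminus fspan_add fspan_uminus)

lemma fspan_mono:
  assumes "S \<subseteq> T" "x \<in> fspan S" shows "x \<in> fspan T"
  using assms(2) by induction (use assms(1) in \<open>auto intro: fspan.intros\<close>)

lemma fspan_sum: "finite K \<Longrightarrow> (\<And>k. k \<in> K \<Longrightarrow> f k \<in> fspan S) \<Longrightarrow> sum f K \<in> fspan S"
  by (induction K rule: finite_induct) (auto intro: fspan.intros)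

lemma fext_in_fspan: "(\<And>k. g k \<in> fspan S) \<Longrightarrow> fext fsc g p \<in> fspan S"
  unfolding fext_def by (rule fspan_sum) (auto intro: fspan_smult)

lemma comm_ideal_sum: "finite K \<Longrightarrow> (\<And>k. k \<in> K \<Longrightarrow> f k \<in> comm_ideal) \<Longrightarrow> sum f K \<in> comm_ideal"
  by (induction K rule: finite_induct) (auto intro: comm_ideal.intros)

lemma Z1_all:
  assumes "is_C_algebra scl"
  shows "z \<in> hoch_Z1 scl"
proof -
  have vs: "vector_space scl" and ax: "\<And>c x y. scl c (x * y) = scl c x * y \<and> scl c (x * y) = x * scl c y"
    using assms unfolding is_C_algebra_def by blast+
  have trm: "scl c (m * a - a * m) \<in> comm_ideal" for c m a
  proof -
    have "scl c (m * a - a * m) = scl c (m * a) - scl c (a * m)"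
      by (rule module.scale_right_diff_distrib[OF vs[folded module_iff_vector_space]])
    also have "\<dots> = scl c m * a - a * scl c m" using ax by metis
    finally show ?thesis by (simp add: comm_ideal.ci_comm)
  qed
  show ?thesis unfolding hoch_Z1_def hoch_b1_def fext_def
    by (auto intro!: comm_ideal_sum simp: trm split: prod.splits)
qed

lemma bil2_l: "gen (x + x', y) - gen (x, y) - gen (x', y) \<in> bil2 scl"
  unfolding bil2_def by (rule UnI1, rule UnI1, rule UnI1) blast

lemma bil2_r: "gen (x, y + y') - gen (x, y) - gen (x, y') \<in> bil2 scl"
  unfolding bil2_def by (rule UnI1, rule UnI1, rule UnI2) blast

lemma N1_gen_left:
  assumes "x - x' \<in> comm_ideal"
  shows "gen (x, y) - gen (x', y) \<in> hoch_N1 scl"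
proof -
  have 1: "gen ((x - x') + x', y) - gen (x - x', y) - gen (x', y) \<in> hoch_N1 scl"
    unfolding hoch_N1_def by (rule fspan_base) (rule UnI1, rule bil2_l)
  have 2: "gen (x - x', y) \<in> hoch_N1 scl"
    unfolding hoch_N1_def using assms by (intro fspan_base UnI2) blast
  have e: "gen (x, y) - gen (x', y) = (gen ((x - x') + x', y) - gen (x - x', y) - gen (x', y)) + gen (x - x', y)"
    by simp
  show ?thesis unfolding e using 1 2 unfolding hoch_N1_def by (rule fspan_add)
qed

lemma B1_add: "x \<in> hoch_B1 scl \<Longrightarrow> y \<in> hoch_B1 scl \<Longrightarrow> x + y \<in> hoch_B1 scl"
proof -
  assume "x \<in> hoch_B1 scl" "y \<in> hoch_B1 scl"
  then obtain w n w' n' where "x = hoch_b2 w + n" "n \<in> hoch_N1 scl" "y = hoch_b2 w' + n'" "n' \<in> hoch_N1 scl"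
    unfolding hoch_B1_def by blast
  then have "x + y = hoch_b2 (w + w') + (n + n')" "n + n' \<in> hoch_N1 scl"
    by (auto simp: hoch_b2_def fext_add hoch_N1_def intro: fspan_add)
  then show ?thesis unfolding hoch_B1_def by blast
qed

lemma B1_fsc: "x \<in> hoch_B1 scl \<Longrightarrow> fsc c x \<in> hoch_B1 scl"
proof -
  assume "x \<in> hoch_B1 scl"
  then obtain w n where "x = hoch_b2 w + n" "n \<in> hoch_N1 scl"
    unfolding hoch_B1_def by blast
  then have "fsc c x = hoch_b2 (fsc c w) + fsc c n" "fsc c n \<in> hoch_N1 scl"
    by (auto simp: hoch_b2_def fext_fsc fsc_add hoch_N1_def intro: fspan_smult)
  then show ?thesis unfolding hoch_B1_def by blast
qed

lemma B1_uminus: "x \<in> hoch_B1 scl \<Longrightarrow> - x \<in> hoch_B1 scl"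
  using B1_fsc[of x scl "-1"] by (simp add: fsc_m1)

lemma B1_diff: "x \<in> hoch_B1 scl \<Longrightarrow> y \<in> hoch_B1 scl \<Longrightarrow> x - y \<in> hoch_B1 scl"
  using B1_add[OF _ B1_uminus, of x scl y] by simp

lemma N1_B1: assumes "n \<in> hoch_N1 scl" shows "n \<in> hoch_B1 scl"
proof -
  have "n = hoch_b2 0 + n" by (simp add: hoch_b2_def)
  then show ?thesis unfolding hoch_B1_def using assms by blast
qed

lemma b2_B1: "hoch_b2 w \<in> hoch_B1 scl"
  unfolding hoch_B1_def hoch_N1_def by (force intro: fspan_zero)

lemma fspan_B1:
  assumes "S \<subseteq> hoch_B1 scl" "x \<in> fspan S" shows "x \<in> hoch_B1 scl"
  using assms(2)
proof induction
  case (fspan_base x) then show ?case using assms(1) by blast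
next
  case fspan_zero then show ?case by (rule N1_B1) (simp add: hoch_N1_def fspan.fspan_zero)
next
  case (fspan_add x y) then show ?case by (intro B1_add)
next
  case (fspan_smult x c) then show ?case by (intro B1_fsc)
qed

lemma leibniz_B1: "gen (a, b * c) - gen (a * b, c) - gen (a * c, b) \<in> hoch_B1 scl"
proof -
  have G: "hoch_b2 (gen (a, b, c)) = gen (a * b, c) - gen (a, b * c) + gen (c * a, b)"
    by (simp add: hoch_b2_def)
  have N: "gen (c * a, b) - gen (a * c, b) \<in> hoch_N1 scl"
    by (rule N1_gen_left) (rule comm_ideal.ci_comm)
  have e: "gen (a, b * c) - gen (a * b, c) - gen (a * c, b) = - hoch_b2 (gen (a, b, c)) + (gen (c * a, b) - gen (a * c, b))"
    by (simp add: G)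
  show ?thesis unfolding e by (rule B1_add[OF B1_uminus[OF b2_B1] N1_B1[OF N]])
qed

lemma bil_B1: "gen (a, y + y') - gen (a, y) - gen (a, y') \<in> hoch_B1 scl"
  by (rule N1_B1) (unfold hoch_N1_def, rule fspan_base, rule UnI1, rule bil2_r)

lemma ci_N1: "i \<in> comm_ideal \<Longrightarrow> gen (i, a) \<in> hoch_B1 scl"
  by (rule N1_B1) (unfold hoch_N1_def, rule fspan_base, rule UnI2, blast)

lemma right_ideal_B1: "i \<in> comm_ideal \<Longrightarrow> gen (a, i) \<in> hoch_B1 scl"
proof (induction i arbitrary: a rule: comm_ideal.induct)
  case (ci_comm x y)
  have e: "gen (a, x * y - y * x) = (gen (a, x * y) - gen (a * x, y) - gen (a * y, x))
      - (gen (a, y * x) - gen (a * y, x) - gen (a * x, y))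
      - (gen (a, (x * y - y * x) + y * x) - gen (a, x * y - y * x) - gen (a, y * x))"
    by simp
  show ?case by (subst e) (rule B1_diff[OF B1_diff[OF leibniz_B1 leibniz_B1] bil_B1])
next
  case ci_zero
  have e: "gen (a, 0::'a) = - (gen (a, 0 + 0) - gen (a, 0) - gen (a, 0))" by simp
  show ?case by (subst e) (rule B1_uminus[OF bil_B1])
next
  case (ci_add u v)
  have e: "gen (a, u + v) = (gen (a, u + v) - gen (a, u) - gen (a, v)) + gen (a, u) + gen (a, v)" by simp
  show ?case by (subst e) (rule B1_add[OF B1_add[OF bil_B1 ci_add.IH(1)] ci_add.IH(2)])
next
  case (ci_left u r)
  have e: "gen (a, r * u) = (gen (a, r * u) - gen (a * r, u) - gen (a * u, r)) + gen (a * r, u) + gen (a * u, r)" by simp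
  moreover have "gen (a * u, r) \<in> hoch_B1 scl" by (rule ci_N1) (rule comm_ideal.ci_left[OF ci_left.hyps(1)])
  ultimately show ?case by (subst e) (rule B1_add[OF B1_add[OF leibniz_B1 ci_left.IH]])
next
  case (ci_right u r)
  have e: "gen (a, u * r) = (gen (a, u * r) - gen (a * u, r) - gen (a * r, u)) + gen (a * u, r) + gen (a * r, u)" by simp
  moreover have "gen (a * u, r) \<in> hoch_B1 scl" by (rule ci_N1) (rule comm_ideal.ci_left[OF ci_right.hyps(1)])
  ultimately show ?case by (subst e) (rule B1_add[OF B1_add[OF leibniz_B1] ci_right.IH])
qed

lemma D_B1: "x \<in> kaehler_D scl \<Longrightarrow> x \<in> hoch_B1 scl"
  unfolding kaehler_D_def
proof (erule fspan_B1[rotated])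
  show "bil2 scl \<union> {gen (i, a) |i a. i \<in> comm_ideal} \<union> {gen (a, i) |i a. i \<in> comm_ideal} \<union>
    {gen (a, b * c) - gen (a * b, c) - gen (a * c, b) |a b c. True} \<subseteq> hoch_B1 scl"
  proof (intro Un_least subsetI)
    fix x assume "x \<in> bil2 scl" then show "x \<in> hoch_B1 scl"
      by (intro N1_B1) (simp add: hoch_N1_def fspan_base)
  qed (auto intro: ci_N1 right_ideal_B1 leibniz_B1)
qed

lemma B1_D: "x \<in> hoch_B1 scl \<Longrightarrow> x \<in> kaehler_D scl"
proof -
  assume "x \<in> hoch_B1 scl"
  then obtain w n where x: "x = hoch_b2 w + n" "n \<in> hoch_N1 scl"
    unfolding hoch_B1_def by blast
  have sub: "bil2 scl \<union> {gen (i, a) |i a. i \<in> comm_ideal} \<subseteq> bil2 scl \<union> {gen (i, a) |i a. i \<in> comm_ideal} \<union> {gen (a, i) |i a. i \<in> comm_ideal} \<union>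
    {gen (a, b * c) - gen (a * b, c) - gen (a * c, b) |a b c. True}" by blast
  have ND: "n \<in> hoch_N1 scl \<Longrightarrow> n \<in> kaehler_D scl" for n
    unfolding hoch_N1_def kaehler_D_def by (erule fspan_mono[OF sub])
  have "(case k of (m, a, b) \<Rightarrow> gen (m * a, b) - gen (m, a * b) + gen (b * m, a)) \<in> kaehler_D scl" for k
  proof (cases k)
    case (fields m a b)
    have L: "gen (m, a * b) - gen (m * a, b) - gen (m * b, a) \<in> kaehler_D scl"
      unfolding kaehler_D_def by (rule fspan_base) blast
    have R: "gen (b * m, a) - gen (m * b, a) \<in> kaehler_D scl"
      by (rule ND, rule N1_gen_left, rule comm_ideal.ci_comm)
    have e: "gen (m * a, b) - gen (m, a * b) + gen (b * m, a) = - (gen (m, a * b) - gen (m * a, b) - gen (m * b, a)) + (gen (b * m, a) - gen (m * b, a))"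
      by simp
    show ?thesis unfolding fields prod.case e using L R unfolding kaehler_D_def by (intro fspan_add fspan_uminus)
  qed
  then have "hoch_b2 w \<in> kaehler_D scl"
    unfolding hoch_b2_def kaehler_D_def by (intro fext_in_fspan) simp
  then show ?thesis unfolding x(1) using ND[OF x(2)] unfolding kaehler_D_def by (rule fspan_add)
qed

theorem proposition1p3p3:
  fixes scl :: "complex \<Rightarrow> 'a::ring_1 \<Rightarrow> 'a"
  assumes "is_C_algebra scl"
  shows "subquot_iso act1 (hoch_Z1 scl) (hoch_B1 scl) act1 (kaehler_D scl)"
  unfolding subquot_iso_def Let_def
proof (intro exI[of _ gen] conjI)
  show "\<forall>z\<in>hoch_B1 scl. fext fsc gen z \<in> kaehler_D scl" by (simp add: fext_id B1_D)
  show "\<forall>z\<in>hoch_Z1 scl. fext fsc gen z \<in> kaehler_D scl \<longrightarrow> z \<in> hoch_B1 scl" by (simp add: fext_id D_B1)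
  show "\<forall>w. \<exists>z\<in>hoch_Z1 scl. w - fext fsc gen z \<in> kaehler_D scl"
  proof
    fix w show "\<exists>z\<in>hoch_Z1 scl. w - fext fsc gen z \<in> kaehler_D scl"
      using Z1_all[OF assms, of w] by (auto simp: fext_id kaehler_D_def intro!: bexI[of _ w] fspan_zero)
  qed
  show "\<forall>r. \<forall>z\<in>hoch_Z1 scl. fext fsc gen (act1 r z) - act1 r (fext fsc gen z) \<in> kaehler_D scl"
    by (simp add: fext_id kaehler_D_def fspan_zero)
qed

end
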